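(* Fix $M>0$. If $c,d\in\ell_{\infty,M}(X^\ast,\mathbb{K}^\ell)$, then for every $\epsilon>0$, with $M_\epsilon=M(1+\epsilon)$, one has $c\sqcup\!\sqcup\, d\in \ell_{\infty,M_\epsilon}(X^\ast,\mathbb{K}^\ell)$ and $$\|c\sqcup\!\sqcup\, d\|_{\ell_\infty,M_\epsilon}\leq K_\epsilon\,\|c\|_{\ell_\infty,M}\,\|d\|_{\ell_\infty,M},$$ where $K_\epsilon=\sup_{\eta\in X^\ast}(|\eta|+1)/(1+\epsilon)^{|\eta|}$, and moreover $K_\epsilon\leq \hat K_\epsilon:=e^{-1}(1+\epsilon)/\log(1+\epsilon)$.
   Context: $\mathbb{K}\in\{\mathbb{R},\mathbb{C}\}$. $X=\{x_0,x_1,\ldots,x_m\}$ is a finite alphabet of noncommuting letters, $X^\ast$ the set of words (finite sequences of letters, including the empty word $\emptyset$), $|\eta|$ the length of a word. A formal power series is a map $c\colon X^\ast\to\mathbb{K}^\ell$, written $c=\sum_\eta (c,\eta)\eta$; the set of these is $\mathbb{K}^\ell\langle\langle X\rangle\rangle$. The shuffle product $\sqcup\!\sqcup$ is the bilinear product determined on words by $(x_i\eta)\sqcup\!\sqcup(x_j\xi)=x_i(\eta\sqcup\!\sqcup(x_j\xi))+x_j((x_i\eta)\sqcup\!\sqcup\xi)$, $\eta\sqcup\!\sqcup\emptyset=\emptyset\sqcup\!\sqcup\eta=\eta$, extended to series by $(c\sqcup\!\sqcup d,\eta)=\sum_{\nu,\xi}(c,\nu)(d,\xi)(\nu\sqcup\!\sqcup\xi,\eta)$,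 and componentwise for $\mathbb{K}^\ell$-valued series. For $M>0$ and $c\in\mathbb{K}^\ell\langle\langle X\rangle\rangle$ put $\|c\|_{\ell_\infty,M}=\sup_{\eta\in X^\ast}|(c,\eta)|/(M^{|\eta|}|\eta|!)\in[0,\infty]$, where $|z|=\max_i|z_i|$ for $z\in\mathbb{K}^\ell$; $\ell_{\infty,M}(X^\ast,\mathbb{K}^\ell)$ is the Banach space of all $c$ with $\|c\|_{\ell_\infty,M}<\infty$. *)

theory Defs
  imports "HOL-Analysis.Analysis"
begin

text \<open>Words over the finite alphabet 'a are lists. A K^l-valued formal power series
is a map from words to 'l \<Rightarrow> 'k, with 'l a finite index type (components).\<close>

text \<open>Shuffle coefficient (nu shuffle xi, eta): number of interleavings of nu and xi giving eta,
defined by the recursion (x_i nu) sh (x_j xi) = x_i (nu sh x_j xi) + x_j (x_i nu sh xi).\<close>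
fun shuffle_coeff :: "'a list \<Rightarrow> 'a list \<Rightarrow> 'a list \<Rightarrow> nat" where
  "shuffle_coeff [] xi eta = (if xi = eta then 1 else 0)"
| "shuffle_coeff (a # nu) [] eta = (if a # nu = eta then 1 else 0)"
| "shuffle_coeff (a # nu) (b # xi) [] = 0"
| "shuffle_coeff (a # nu) (b # xi) (e # eta) =
     (if a = e then shuffle_coeff nu (b # xi) eta else 0)
   + (if b = e then shuffle_coeff (a # nu) xi eta else 0)"

definition shuffle_series ::
  "('a::finite list \<Rightarrow> 'l \<Rightarrow> 'k::real_normed_field) \<Rightarrow> ('a list \<Rightarrow> 'l \<Rightarrow> 'k) \<Rightarrow> 'a list \<Rightarrow> 'l \<Rightarrow> 'k" where
  "shuffle_series c d eta i =
     (\<Sum>(nu, xi) \<in> {(nu, xi). length nu + length xi = length eta}.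
        c nu i * d xi i * of_nat (shuffle_coeff nu xi eta))"

definition maxnorm :: "('l::finite \<Rightarrow> 'k::real_normed_field) \<Rightarrow> real" where
  "maxnorm z = Max (range (\<lambda>i. norm (z i)))"

definition linf_norm :: "real \<Rightarrow> ('a list \<Rightarrow> 'l::finite \<Rightarrow> 'k::real_normed_field) \<Rightarrow> ennreal" where
  "linf_norm M c = (SUP eta. ennreal (maxnorm (c eta) / (M ^ length eta * fact (length eta))))"

definition K_eps :: "'a itself \<Rightarrow> real \<Rightarrow> real" where
  "K_eps _ eps = (SUP eta :: 'a list. (real (length eta) + 1) / (1 + eps) ^ length eta)"

end

theory Submission imports Defs begin

lemma finite_len: "finite {xs :: 'a::finite list. length xs = k}"
  using finite_lists_length_eq[of "UNIV :: 'a set" k] by simp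

lemma sh_len: "shuffle_coeff nu xi eta \<noteq> 0 \<Longrightarrow> length nu + length xi = length eta"
  by (induction nu xi eta rule: shuffle_coeff.induct) (auto split: if_splits)

lemma sh_Nil2: "shuffle_coeff nu [] eta = (if nu = eta then 1 else 0)"
  by (cases nu) auto

lemma sum_len_Suc:
  "(\<Sum>nu\<in>{nu :: 'a::finite list. length nu = Suc k}. f nu)
     = (\<Sum>a\<in>UNIV. \<Sum>nu\<in>{nu. length nu = k}. f (a # nu))"
proof -
  have e: "{nu :: 'a list. length nu = Suc k} = (\<lambda>(a,nu). a # nu) ` (UNIV \<times> {nu. length nu = k})"
    by (auto simp: length_Suc_conv image_iff)
  have i: "inj_on (\<lambda>(a,nu). a # (nu::'a list)) (UNIV \<times> {nu. length nu = k})"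
    by (auto simp: inj_on_def)
  show ?thesis
    unfolding e sum.reindex[OF i] by (auto simp: sum.cartesian_product intro!: sum.cong)
qed

lemma len0: "{nu :: 'a list. length nu = 0} = {[]}" by auto

lemma cnt:
  "(\<Sum>nu\<in>{nu :: 'a::finite list. length nu = k}. \<Sum>xi\<in>{xi. length xi = m}. shuffle_coeff nu xi eta)
   = (if k + m = length eta then (k + m) choose k else 0)"
proof (induction eta arbitrary: k m)
  case Nil
  then show ?case
  proof (cases "k + m = 0")
    case True
    then show ?thesis by (simp add: len0)
  next
    case False
    then show ?thesis using sh_len[of _ _ "[]"] by (auto intro!: sum.neutral)
  qed
next
  case (Cons e eta)
  show ?case
  proof (cases "k + m = length (e # eta)")
    case False
    then show ?thesis using sh_len[of _ _ "e # eta"] by (auto intro!: sum.neutral)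
  next
    case T: True
    show ?thesis
    proof (cases k)
      case 0
      have "(\<Sum>xi\<in>{xi. length xi = m}. shuffle_coeff [] xi (e # eta)) = 
            (\<Sum>xi\<in>{xi. length xi = m}. if xi = e # eta then 1 else 0)" by simp
      also have "\<dots> = 1" using T 0 by (simp add: sum.delta' finite_len)
      finally show ?thesis using 0 T by (simp add: len0)
    next
      case (Suc k')
      show ?thesis
      proof (cases m)
        case 0
        have "(\<Sum>nu\<in>{nu. length nu = k}. shuffle_coeff nu [] (e # eta)) = 
            (\<Sum>nu\<in>{nu. length nu = k}. if nu = e # eta then 1 else 0)" by (simp add: sh_Nil2)
        also have "\<dots> = 1" using T 0 by (simp add: sum.delta' finite_len)
        finally show ?thesis using 0 T by (simp add: len0)
      next
        case (Suc m')
        have A: "(\<Sum>a\<in>UNIV. \<Sum>nu\<in>{nu. length nu = k'}. \<Sum>b\<in>UNIV. \<Sum>xi\<in>{xi. length xi = m'}.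
              (if a = e then shuffle_coeff nu (b # xi) eta else 0))
           = (\<Sum>nu\<in>{nu :: 'a list. length nu = k'}. \<Sum>xi\<in>{xi. length xi = m}. shuffle_coeff nu xi eta)"
        proof -
          have "(\<Sum>a\<in>UNIV. \<Sum>nu\<in>{nu. length nu = k'}. \<Sum>b\<in>UNIV. \<Sum>xi\<in>{xi. length xi = m'}.
              (if a = e then shuffle_coeff nu (b # xi) eta else 0))
             = (\<Sum>a\<in>UNIV. if a = e then (\<Sum>nu\<in>{nu. length nu = k'}. \<Sum>b\<in>UNIV. \<Sum>xi\<in>{xi. length xi = m'}.
               shuffle_coeff nu (b # xi) eta) else 0)"
            by (rule sum.cong) auto
          also have "\<dots> = (\<Sum>nu\<in>{nu. length nu = k'}. \<Sum>b\<in>UNIV. \<Sum>xi\<in>{xi. length xi = m'}.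
               shuffle_coeff nu (b # xi) eta)" by simp
          also have "\<dots> = (\<Sum>nu\<in>{nu :: 'a list. length nu = k'}. \<Sum>xi\<in>{xi. length xi = m}. shuffle_coeff nu xi eta)"
            using Suc by (simp add: sum_len_Suc)
          finally show ?thesis .
        qed
        have B: "(\<Sum>a\<in>UNIV. \<Sum>nu\<in>{nu. length nu = k'}. \<Sum>b\<in>UNIV. \<Sum>xi\<in>{xi. length xi = m'}.
              (if b = e then shuffle_coeff (a # nu) xi eta else 0))
           = (\<Sum>nu\<in>{nu :: 'a list. length nu = k}. \<Sum>xi\<in>{xi. length xi = m'}. shuffle_coeff nu xi eta)"
        proof -
          have "\<And>a nu. (\<Sum>b\<in>UNIV. \<Sum>xi\<in>{xi. length xi = m'}.
              (if b = e then shuffle_coeff (a # nu) xi eta else 0))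
             = (\<Sum>b\<in>UNIV. if b = e then (\<Sum>xi\<in>{xi. length xi = m'}. shuffle_coeff (a # nu) xi eta) else 0)"
            by (rule sum.cong) auto
          then show ?thesis using \<open>k = Suc k'\<close> by (simp add: sum_len_Suc)
        qed
        have "(\<Sum>nu\<in>{nu :: 'a list. length nu = k}. \<Sum>xi\<in>{xi. length xi = m}. shuffle_coeff nu xi (e # eta))
          = (\<Sum>a\<in>UNIV. \<Sum>nu\<in>{nu. length nu = k'}. \<Sum>b\<in>UNIV. \<Sum>xi\<in>{xi. length xi = m'}.
              (if a = e then shuffle_coeff nu (b # xi) eta else 0) + (if b = e then shuffle_coeff (a # nu) xi eta else 0))"
          using \<open>k = Suc k'\<close> Suc by (simp add: sum_len_Suc)
        also have "\<dots> = (\<Sum>nu\<in>{nu :: 'a list. length nu = k'}. \<Sum>xi\<in>{xi. length xi = m}. shuffle_coeff nu xi eta)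
            + (\<Sum>nu\<in>{nu :: 'a list. length nu = k}. \<Sum>xi\<in>{xi. length xi = m'}. shuffle_coeff nu xi eta)"
          unfolding A[symmetric] B[symmetric] by (simp add: sum.distrib)
        also have "\<dots> = (k + m) choose k"
          unfolding Cons.IH using T \<open>k = Suc k'\<close> Suc by simp
        finally show ?thesis using T by simp
      qed
    qed
  qed
qed


lemma Kbound:
  fixes eps :: real assumes "eps > 0"
  shows "(real n + 1) / (1 + eps) ^ n \<le> exp (-1) * (1 + eps) / ln (1 + eps)"
proof -
  define L where "L = ln (1 + eps)"
  have L: "L > 0" using assms by (simp add: L_def)
  have qe: "1 + eps = exp L" using assms by (simp add: L_def)
  have q: "(1 + eps) ^ n = exp (real n * L)"
    unfolding qe by (rule exp_of_nat_mult[symmetric])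
  define t where "t = (real n + 1) * L"
  have t1: "t \<le> exp (t - 1)" using exp_ge_add_one_self[of "t - 1"] by simp
  have "(real n + 1) / (1 + eps) ^ n = t * exp (- t) * exp L / L"
    using L by (simp add: q t_def field_simps exp_add[symmetric] exp_minus algebra_simps)
  also have "t * exp (- t) \<le> exp (-1)"
  proof -
    have "t * exp (-t) \<le> exp (t - 1) * exp (-t)" using t1 by simp
    also have "\<dots> = exp (-1)" by (simp add: exp_add[symmetric])
    finally show ?thesis .
  qed
  hence "t * exp (- t) * exp L / L \<le> exp (-1) * exp L / L"
    using L by (simp add: divide_right_mono)
  also have "exp (-1) * exp L / L = exp (-1) * (1 + eps) / ln (1 + eps)"
    unfolding qe[symmetric] by (simp only: L_def)
  finally show ?thesis .
qed

lemma weighted: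
  fixes w :: "nat \<Rightarrow> nat \<Rightarrow> real" and eta :: "'a::finite list"
  shows "(\<Sum>(nu, xi) \<in> {(nu, xi). length nu + length xi = length eta}.
            w (length nu) (length xi) * of_nat (shuffle_coeff nu xi eta))
       = (\<Sum>k\<le>length eta. w k (length eta - k) * of_nat (length eta choose k))"
proof -
  define n where "n = length eta"
  define S where "S = {(nu :: 'a list, xi :: 'a list). length nu + length xi = n}"
  have fS: "finite S"
  proof -
    have "S \<subseteq> (\<Union>k\<le>n. {nu. length nu = k}) \<times> (\<Union>k\<le>n. {nu. length nu = k})"
      by (auto simp: S_def)
    then show ?thesis by (rule finite_subset) (intro finite_cartesian_product finite_UN_I; blast intro: finite_len)
  qed
  have g: "(\<lambda>x. length (fst x)) ` S \<subseteq> {..n}" by (auto simp: S_def)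
  have "(\<Sum>(nu, xi) \<in> S. w (length nu) (length xi) * of_nat (shuffle_coeff nu xi eta))
     = (\<Sum>k\<le>n. \<Sum>(nu, xi) \<in> {x \<in> S. length (fst x) = k}. w (length nu) (length xi) * of_nat (shuffle_coeff nu xi eta))"
    by (rule sum.group[OF fS _ g, symmetric]) simp
  also have "\<dots> = (\<Sum>k\<le>n. w k (n - k) * of_nat (n choose k))"
  proof (rule sum.cong[OF refl])
    fix k assume k: "k \<in> {..n}"
    have e: "{x \<in> S. length (fst x) = k} = {nu. length nu = k} \<times> {xi. length xi = n - k}"
      using k by (auto simp: S_def)
    have "(\<Sum>(nu, xi) \<in> {x \<in> S. length (fst x) = k}. w (length nu) (length xi) * of_nat (shuffle_coeff nu xi eta))
      = (\<Sum>nu\<in>{nu :: 'a list. length nu = k}. \<Sum>xi\<in>{xi. length xi = n - k}. w k (n - k) * of_nat (shuffle_coeff nu xi eta))"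
      unfolding e sum.cartesian_product by (rule sum.cong) auto
    also have "\<dots> = w k (n - k) * of_nat (\<Sum>nu\<in>{nu :: 'a list. length nu = k}. \<Sum>xi\<in>{xi. length xi = n - k}. shuffle_coeff nu xi eta)"
      by (simp add: sum_distrib_left)
    also have "\<dots> = w k (n - k) * of_nat (n choose k)"
      unfolding cnt using k by (simp add: n_def)
    finally show "(\<Sum>(nu, xi) \<in> {x \<in> S. length (fst x) = k}. w (length nu) (length xi) * of_nat (shuffle_coeff nu xi eta))
       = w k (n - k) * of_nat (n choose k)" .
  qed
  finally show ?thesis by (simp add: S_def n_def)
qed

lemma factsum: "(\<Sum>k\<le>n. fact k * fact (n - k) * real (n choose k)) = (real n + 1) * fact n"
proof -
  have "(\<Sum>k\<le>n. fact k * fact (n - k) * real (n choose k)) = (\<Sum>k\<le>n. (fact n :: real))"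
  proof (rule sum.cong[OF refl])
    fix k assume "k \<in> {..n}"
    then have "fact k * fact (n - k) * (n choose k) = (fact n :: nat)" by (simp add: binomial_fact_lemma)
    then have "real (fact k * fact (n - k) * (n choose k)) = real (fact n)" by simp
    then show "fact k * fact (n - k) * real (n choose k) = (fact n :: real)"
      by (simp only: of_nat_mult of_nat_fact)
  qed
  then show ?thesis by simp
qed


lemma maxnorm_ge: "norm (z i) \<le> maxnorm (z :: 'l::finite \<Rightarrow> 'k::real_normed_field)"
  unfolding maxnorm_def by (rule Max_ge) auto

lemma coef_bound:
  fixes c :: "'a list \<Rightarrow> 'l::finite \<Rightarrow> 'k::real_normed_field"
  assumes M: "M > 0" and fin: "linf_norm M c < \<infinity>"
  shows "norm (c nu i) \<le> enn2real (linf_norm M c) * (M ^ length nu * fact (length nu))"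
proof -
  have pos: "M ^ length nu * fact (length nu) > 0" using M by simp
  have "ennreal (maxnorm (c nu) / (M ^ length nu * fact (length nu))) \<le> linf_norm M c"
    unfolding linf_norm_def by (rule SUP_upper) simp
  hence "enn2real (ennreal (maxnorm (c nu) / (M ^ length nu * fact (length nu)))) \<le> enn2real (linf_norm M c)"
    using fin by (intro enn2real_mono) auto
  moreover have "maxnorm (c nu) \<ge> 0" using maxnorm_ge[of "c nu" i] norm_ge_zero order_trans by blast
  ultimately have "maxnorm (c nu) / (M ^ length nu * fact (length nu)) \<le> enn2real (linf_norm M c)"
    using pos by simp
  hence "maxnorm (c nu) \<le> enn2real (linf_norm M c) * (M ^ length nu * fact (length nu))"
    using pos by (simp add: divide_le_eq)
  then show ?thesis using maxnorm_ge[of "c nu" i] by linarith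
qed

theorem lemma3p3:
  fixes M eps :: real
    and c d :: "'a::finite list \<Rightarrow> 'l::finite \<Rightarrow> 'k::real_normed_field"
  assumes "M > 0" and "linf_norm M c < \<infinity>" and "linf_norm M d < \<infinity>" and "eps > 0"
  shows "linf_norm (M * (1 + eps)) (shuffle_series c d) < \<infinity>
       \<and> linf_norm (M * (1 + eps)) (shuffle_series c d)
           \<le> ennreal (K_eps TYPE('a) eps) * linf_norm M c * linf_norm M d
       \<and> K_eps TYPE('a) eps \<le> exp (-1) * (1 + eps) / ln (1 + eps)"
proof -
  note M = assms(1) and fc = assms(2) and fd = assms(3) and ep = assms(4)
  define K where "K = K_eps TYPE('a) eps"
  define A where "A = enn2real (linf_norm M c)"
  define B where "B = enn2real (linf_norm M d)"
  have A0: "A \<ge> 0" and B0: "B \<ge> 0" by (simp_all add: A_def B_def)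
  have bdd: "bdd_above (range (\<lambda>eta :: 'a list. (real (length eta) + 1) / (1 + eps) ^ length eta))"
    using Kbound[OF ep] by (intro bdd_aboveI) auto
  have Kge: "(real n + 1) / (1 + eps) ^ n \<le> K" for n
  proof -
    have "(real (length (replicate n (undefined::'a))) + 1) / (1 + eps) ^ length (replicate n (undefined::'a)) \<le> K"
      unfolding K_def K_eps_def by (rule cSUP_upper[OF _ bdd]) simp
    then show ?thesis by simp
  qed
  have K0: "K \<ge> 0" using Kge[of 0] by simp
  have Kle: "K \<le> exp (-1) * (1 + eps) / ln (1 + eps)"
    unfolding K_def K_eps_def by (rule cSUP_least) (auto intro: Kbound[OF ep])
  have main: "maxnorm (shuffle_series c d eta) / ((M * (1 + eps)) ^ length eta * fact (length eta)) \<le> A * B * K"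
    for eta :: "'a list"
  proof -
    define n where "n = length eta"
    have pn: "(M * (1 + eps)) ^ n * fact n > 0" using M ep by simp
    have comp: "norm (shuffle_series c d eta i) \<le> A * B * M ^ n * ((real n + 1) * fact n)" for i
    proof -
      have "norm (shuffle_series c d eta i) \<le> (\<Sum>(nu, xi) \<in> {(nu, xi). length nu + length xi = length eta}.
          norm (c nu i * d xi i * of_nat (shuffle_coeff nu xi eta)))"
        unfolding shuffle_series_def case_prod_beta by (rule norm_sum)
      also have "\<dots> \<le> (\<Sum>(nu, xi) \<in> {(nu, xi). length nu + length xi = length eta}.
          (A * B * M ^ n) * (fact (length nu) * fact (length xi)) * of_nat (shuffle_coeff nu xi eta))"
      proof (rule sum_mono)
        fix x assume "x \<in> {(nu :: 'a list, xi :: 'a list). length nu + length xi = length eta}"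
        then obtain nu xi where x: "x = (nu, xi)" and l: "length nu + length xi = n" by (auto simp: n_def)
        have "norm (c nu i * d xi i * of_nat (shuffle_coeff nu xi eta))
           = norm (c nu i) * norm (d xi i) * real (shuffle_coeff nu xi eta)"
          by (simp add: norm_mult)
        also have "\<dots> \<le> (A * (M ^ length nu * fact (length nu))) * (B * (M ^ length xi * fact (length xi))) * real (shuffle_coeff nu xi eta)"
          using coef_bound[OF M fc, of nu i] coef_bound[OF M fd, of xi i]
          using M by (intro mult_right_mono mult_mono) (auto simp: A_def B_def)
        also have "\<dots> = (A * B * M ^ n) * (fact (length nu) * fact (length xi)) * of_nat (shuffle_coeff nu xi eta)"
          using l by (simp add: power_add[symmetric] algebra_simps)
        finally show "(case x of (nu, xi) \<Rightarrow> norm (c nu i * d xi i * of_nat (shuffle_coeff nu xi eta)))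
           \<le> (case x of (nu, xi) \<Rightarrow> (A * B * M ^ n) * (fact (length nu) * fact (length xi)) * of_nat (shuffle_coeff nu xi eta))"
          by (simp add: x)
      qed
      also have "\<dots> = (A * B * M ^ n) * (\<Sum>(nu, xi) \<in> {(nu, xi). length nu + length xi = length eta}.
           (fact (length nu) * fact (length xi)) * of_nat (shuffle_coeff nu xi eta))"
        by (simp add: sum_distrib_left case_prod_beta mult.assoc)
      also have "(\<Sum>(nu, xi) \<in> {(nu, xi). length nu + length xi = length eta}.
           (fact (length nu) * fact (length xi)) * of_nat (shuffle_coeff nu xi eta))
         = (\<Sum>k\<le>n. fact k * fact (n - k) * real (n choose k))"
        using weighted[of "\<lambda>a b. fact a * fact b" eta] by (simp add: n_def)
      also have "\<dots> = (real n + 1) * fact n" by (rule factsum)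
      finally show ?thesis .
    qed
    have "maxnorm (shuffle_series c d eta) \<le> A * B * M ^ n * ((real n + 1) * fact n)"
      unfolding maxnorm_def using comp by (subst Max_le_iff) auto
    hence "maxnorm (shuffle_series c d eta) / ((M * (1 + eps)) ^ n * fact n)
        \<le> A * B * M ^ n * ((real n + 1) * fact n) / ((M * (1 + eps)) ^ n * fact n)"
      using pn by (intro divide_right_mono) auto
    also have "\<dots> = A * B * ((real n + 1) / (1 + eps) ^ n)"
    proof -
      have "(1 + eps) ^ n \<noteq> 0" "M ^ n \<noteq> 0" "(fact n :: real) \<noteq> 0" using M ep by auto
      then show ?thesis using M unfolding power_mult_distrib by (simp add: divide_simps)
    qed
    also have "\<dots> \<le> A * B * K"
      using Kge[of n] A0 B0 by (intro mult_left_mono) auto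
    finally show ?thesis by (simp add: n_def)
  qed
  have L: "linf_norm (M * (1 + eps)) (shuffle_series c d) \<le> ennreal (A * B * K)"
    unfolding linf_norm_def by (rule SUP_least) (use main in \<open>auto intro: ennreal_leI\<close>)
  have eq: "ennreal (A * B * K) = ennreal K * linf_norm M c * linf_norm M d"
    using A0 B0 K0 fc fd by (simp add: A_def B_def ennreal_mult' ennreal_mult mult.commute mult.left_commute ennreal_enn2real)
  have "linf_norm (M * (1 + eps)) (shuffle_series c d) < \<infinity>"
    using L by (rule le_less_trans) simp
  then show ?thesis
    using L eq Kle by (auto simp: K_def)
qed

end
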